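(* Let $\alpha\in\mathbb{N}_0$ and $N>0$. For every $n\in\mathbb{N}_0$ the Laguerre-type polynomial $L_n^{\alpha,N}$ satisfies, for $0\le x<\infty$, $$\Big\{\big[L_{2,x}^{\alpha}+n\big]+\frac{N}{(\alpha+2)!}\big[L_{2\alpha+4,x}^{\alpha}+(n)_{\alpha+2}\big]\Big\}L_n^{\alpha,N}(x)=0,$$ where for sufficiently smooth $y$, $$L_{2,x}^{\alpha}y(x)=e^x x^{-\alpha}D_x\big\{e^{-x}x^{\alpha+1}D_x y(x)\big\},\qquad L_{2\alpha+4,x}^{\alpha}y(x)=(-1)^{\alpha+1}e^x x\,D_x^{\alpha+2}\big\{e^{-x}D_x^{\alpha+2}[x^{\alpha+1}y(x)]\big\}.$$
   Context: $D_x^i$ denotes the $i$-fold derivative in $x$; $(a)_k=a(a+1)\cdots(a+k-1)$ is the Pochhammer symbol. For $\gamma>-1$, $L_n^{\gamma}(x)=\frac{(\gamma+1)_n}{n!}\,{}_1F_1(-n;\gamma+1;x)$ are the classical Laguerre polynomials. The Laguerre-type polynomials are $L_n^{\alpha,N}(x)=L_n^{\alpha}(x)+N\,T_n^{\alpha}(x)$, where $T_0^{\alpha}=0$ and for $n\ge1$, $T_n^{\alpha}(x)=-t_n^{\alpha}\,x\,L_{n-1}^{\alpha+2}(x)$ with $t_n^{\alpha}=(\alpha+2)_{n-1}/n!$. Note $L_{2,x}^{\alpha}=xD_x^2+(\alpha+1-x)D_x$. *)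

theory Defs
  imports "HOL-Analysis.Analysis"
begin

(* Classical Laguerre polynomial L_n^gamma(x) = (gamma+1)_n/n! * 1F1(-n; gamma+1; x),
   the terminating hypergeometric series written out. *)
definition laguerre :: "nat \<Rightarrow> real \<Rightarrow> real \<Rightarrow> real" where
  "laguerre n \<gamma> x = pochhammer (\<gamma> + 1) n / fact n *
     (\<Sum>k=0..n. pochhammer (- real n) k / (pochhammer (\<gamma> + 1) k * fact k) * x ^ k)"

definition t_coef :: "nat \<Rightarrow> nat \<Rightarrow> real" where
  "t_coef n \<alpha> = pochhammer (real \<alpha> + 2) (n - 1) / fact n"

definition T_lag :: "nat \<Rightarrow> nat \<Rightarrow> real \<Rightarrow> real" where
  "T_lag n \<alpha> x = (if n = 0 then 0
      else - t_coef n \<alpha> * x * laguerre (n - 1) (real \<alpha> + 2) x)"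

definition laguerre_type :: "nat \<Rightarrow> nat \<Rightarrow> real \<Rightarrow> real \<Rightarrow> real" where
  "laguerre_type n \<alpha> N x = laguerre n (real \<alpha>) x + N * T_lag n \<alpha> x"

(* L_{2,x}^alpha = x D^2 + (alpha+1-x) D  (expanded form of e^x x^{-alpha} D{e^{-x} x^{alpha+1} D}) *)
definition L2op :: "nat \<Rightarrow> (real \<Rightarrow> real) \<Rightarrow> real \<Rightarrow> real" where
  "L2op \<alpha> y x = x * (deriv ^^ 2) y x + (real \<alpha> + 1 - x) * deriv y x"

definition L2a4op :: "nat \<Rightarrow> (real \<Rightarrow> real) \<Rightarrow> real \<Rightarrow> real" where
  "L2a4op \<alpha> y x = (-1) ^ (\<alpha> + 1) * exp x * x *
     (deriv ^^ (\<alpha> + 2)) (\<lambda>t. exp (- t) * (deriv ^^ (\<alpha> + 2)) (\<lambda>s. s ^ (\<alpha> + 1) * y s) t) x"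

end

theory Submission
  imports Defs "HOL-Computational_Algebra.Polynomial"
begin

definition gb :: "real \<Rightarrow> nat \<Rightarrow> real" where
  "gb a m = pochhammer a m / fact m"

lemma gb_0[simp]: "gb a 0 = 1" by (simp add: gb_def)
lemma gb_Suc1: "gb a (Suc m) = gb a m * (a + real m) / (real m + 1)"
  by (simp add: gb_def pochhammer_Suc field_simps)
lemma gb_Suc2: "gb a (Suc m) = a / (real m + 1) * gb (a+1) m"
  by (simp add: gb_def pochhammer_rec field_simps)

definition lc :: "nat \<Rightarrow> real \<Rightarrow> nat \<Rightarrow> real" where
  "lc n g k = (if k \<le> n then (-1)^k / fact k * gb (g + real k + 1) (n - k) else 0)"

definition lagp :: "nat \<Rightarrow> real \<Rightarrow> real poly" where
  "lagp n g = (\<Sum>k\<le>n. monom (lc n g k) k)"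

lemma coeff_lagp[simp]: "coeff (lagp n g) i = lc n g i"
  by (simp add: lagp_def coeff_sum lc_def)

lemma R1: "pderiv (lagp (Suc j) g) = - lagp j (g+1)"
proof (rule poly_eqI)
  fix k
  show "coeff (pderiv (lagp (Suc j) g)) k = coeff (- lagp j (g+1)) k"
  proof (cases "k \<le> j")
    case True
    then obtain d where d: "j = k + d" using le_Suc_ex by blast
    have e: "g + real (Suc k) + 1 = g + 1 + real k + 1" by simp
    show ?thesis unfolding coeff_pderiv coeff_minus coeff_lagp lc_def using d
      by (simp add: e Suc_diff_le)
  qed (simp add: coeff_pderiv lc_def)
qed

lemma R1_0: "pderiv (lagp 0 g) = 0"
  by (rule poly_eqI) (simp add: coeff_pderiv lc_def)

lemma lagp_0: "lagp 0 g = 1"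
  by (rule poly_eqI) (simp add: lc_def coeff_1)

lemma gb_shift: "a * gb (a+1) d = gb a d * (a + real d)"
proof -
  have "gb a (Suc d) * (real d + 1) = a * gb (a+1) d" by (simp add: gb_Suc2)
  moreover have "gb a (Suc d) * (real d + 1) = gb a d * (a + real d)" by (simp add: gb_Suc1)
  ultimately show ?thesis by simp
qed

lemma gb_pascal: "gb (a+1) (Suc m) = gb a (Suc m) + gb (a+1) m"
proof -
  have "gb (a+1) (Suc m) = gb (a+1) m * (a + 1 + real m) / (real m + 1)" by (simp add: gb_Suc1)
  moreover have "gb a (Suc m) = a / (real m + 1) * gb (a+1) m" by (rule gb_Suc2)
  ultimately have "(real m + 1) * gb (a+1) (Suc m) = (real m + 1) * (gb a (Suc m) + gb (a+1) m)"
    by (simp add: field_simps)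
  then show ?thesis by simp
qed

lemma lc_le: "k \<le> n \<Longrightarrow> lc n g k = (-1)^k / fact k * gb (g + real k + 1) (n - k)"
  by (simp add: lc_def)
lemma lc_gt: "n < k \<Longrightarrow> lc n g k = 0"
  by (simp add: lc_def)

lemma R2: "lagp (Suc j) (g+1) = lagp (Suc j) g + lagp j (g+1)"
proof (rule poly_eqI)
  fix k
  show "coeff (lagp (Suc j) (g+1)) k = coeff (lagp (Suc j) g + lagp j (g+1)) k"
  proof (cases "k \<le> j")
    case True
    then obtain d where d: "j = k + d" using le_Suc_ex by blast
    define b where "b = g + real k + 1"
    have 1: "lc (Suc j) (g+1) k = (-1)^k / fact k * gb (b+1) (Suc d)"
      using d by (simp add: lc_le b_def Suc_diff_le algebra_simps)
    have 2: "lc (Suc j) g k = (-1)^k / fact k * gb b (Suc d)"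
      using d by (simp add: lc_le b_def Suc_diff_le algebra_simps)
    have 3: "lc j (g+1) k = (-1)^k / fact k * gb (b+1) d"
      using d by (simp add: lc_le b_def algebra_simps)
    show ?thesis unfolding coeff_add coeff_lagp 1 2 3 gb_pascal[of b] by (simp add: algebra_simps)
  next
    case False
    then show ?thesis by (cases "k = Suc j") (simp_all add: lc_def)
  qed
qed

lemma R5: "smult (g+1) (lagp n (g+1)) + pCons 0 (pderiv (lagp n (g+1))) = smult (real n + g + 1) (lagp n g)"
proof (rule poly_eqI)
  fix k
  have c: "coeff (pCons 0 (pderiv p)) k = real k * coeff p k" for p :: "real poly"
    by (cases k) (simp_all add: coeff_pderiv)
  show "coeff (smult (g+1) (lagp n (g+1)) + pCons 0 (pderiv (lagp n (g+1)))) k = coeff (smult (real n + g + 1) (lagp n g)) k"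
  proof (cases "k \<le> n")
    case True
    then obtain d where d: "n = k + d" using le_Suc_ex by blast
    define b where "b = g + real k + 1"
    have 1: "lc n (g+1) k = (-1)^k / fact k * gb (b+1) d"
      using d by (simp add: lc_le b_def algebra_simps)
    have 2: "lc n g k = (-1)^k / fact k * gb b d"
      using d by (simp add: lc_le b_def algebra_simps)
    have 3: "b * gb (b+1) d = gb b d * (b + real d)" by (rule gb_shift)
    have 4: "g + 1 + real k = b" "real n + g + 1 = b + real d" using d by (simp_all add: b_def)
    have "(g+1) * lc n (g+1) k + real k * lc n (g+1) k = (g + 1 + real k) * lc n (g+1) k"
      by (simp add: algebra_simps)
    also have "\<dots> = (real n + g + 1) * lc n g k"
      unfolding 1 2 4 by (simp add: 3 mult.assoc[symmetric])
    finally show ?thesis by (simp add: c)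
  qed (simp add: lc_def c)
qed

lemma R3: "pCons 0 (lagp j (g+1)) = smult (real j + g + 1) (lagp j g) - smult (real j + 1) (lagp (Suc j) g)"
proof (rule poly_eqI)
  fix k
  show "coeff (pCons 0 (lagp j (g+1))) k = coeff (smult (real j + g + 1) (lagp j g) - smult (real j + 1) (lagp (Suc j) g)) k"
  proof (cases k)
    case 0
    have 1: "lc j g 0 = gb (g+1) j" by (simp add: lc_le)
    have 2: "lc (Suc j) g 0 = gb (g+1) (Suc j)" by (simp add: lc_le)
    show ?thesis using 0 by (simp add: 1 2 gb_Suc1 field_simps)
  next
    case (Suc i)
    show ?thesis
    proof (cases "i < j")
      case True
      then obtain d where d: "j = Suc i + d" using less_iff_Suc_add by auto
      define b where "b = g + real i + 2"
      have 1: "lc j (g+1) i = (-1)^i / fact i * gb b (Suc d)"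
        using d by (simp add: lc_le b_def algebra_simps)
      have 2: "lc j g (Suc i) = - ((-1)^i / (fact i * (real i + 1)) * gb b d)"
        using d by (simp add: lc_le b_def algebra_simps)
      have 3: "lc (Suc j) g (Suc i) = - ((-1)^i / (fact i * (real i + 1)) * gb b (Suc d))"
        using d by (simp add: lc_le b_def algebra_simps Suc_diff_le)
      have 4: "gb b (Suc d) = gb b d * (b + real d) / (real d + 1)" by (rule gb_Suc1)
      have 5: "real j + g + 1 = b + real d" "real j = real i + 1 + real d" using d by (simp_all add: b_def)
      define F where "F = (-1)^i / fact i * gb b d"
      have gg: "g = b - real i - 2" by (simp add: b_def)
      have h1: "lc j (g+1) i = F * (b + real d) / (real d + 1)" unfolding 1 4 F_def by simp
      have h2: "lc j g (Suc i) = - F / (real i + 1)" unfolding 2 F_def by simp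
      have h3: "lc (Suc j) g (Suc i) = - F * (b + real d) / ((real d + 1) * (real i + 1))"
        unfolding 3 4 F_def by (simp add: ac_simps)
      show ?thesis unfolding Suc coeff_pCons_Suc coeff_diff coeff_smult coeff_lagp h1 h2 h3 5 unfolding gg
        by (simp add: divide_simps) algebra
    next
      case False
      then show ?thesis using Suc by (cases "i = j") (simp_all add: lc_def add.commute)
    qed
  qed
qed

lemma polyeq: "(\<And>x. poly p x = poly q x) \<Longrightarrow> p = (q::real poly)"
  using poly_eq_poly_eq_iff by blast

lemma ODE: "pCons 0 (pderiv (pderiv (lagp n g))) + [:g+1, -1:] * pderiv (lagp n g) + smult (real n) (lagp n g) = 0"
proof (cases n)
  case 0
  then show ?thesis by (simp add: lagp_0)
next
  case (Suc j)
  show ?thesis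
  proof (rule polyeq)
    fix x
    have r5: "(g+1) * poly (lagp j (g+1)) x + x * poly (pderiv (lagp j (g+1))) x = (real j + g + 1) * poly (lagp j g) x"
      using arg_cong[OF R5[of g j], of "\<lambda>p. poly p x"] by simp
    have r3: "x * poly (lagp j (g+1)) x = (real j + g + 1) * poly (lagp j g) x - (real j + 1) * poly (lagp (Suc j) g) x"
      using arg_cong[OF R3[of j g], of "\<lambda>p. poly p x"] by simp
    show "poly (pCons 0 (pderiv (pderiv (lagp n g))) + [:g+1, -1:] * pderiv (lagp n g) + smult (real n) (lagp n g)) x = poly 0 x"
      unfolding Suc R1 using r5 r3 by (simp add: pderiv_minus algebra_simps)
  qed
qed
definition Eop :: "real poly \<Rightarrow> real poly" where
  "Eop p = pderiv p - p"

lemma E_lag: "Eop (lagp n g) = - lagp n (g+1)"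
proof (cases n)
  case 0
  then show ?thesis by (simp add: Eop_def lagp_0)
next
  case (Suc j)
  then show ?thesis by (simp add: Eop_def R1 R2)
qed

lemma Ek_lag: "(Eop^^k) (lagp n g) = smult ((-1)^k) (lagp n (g + real k))"
proof (induction k)
  case 0 then show ?case by simp
next
  case (Suc k)
  have "(Eop^^Suc k) (lagp n g) = Eop (smult ((-1)^k) (lagp n (g + real k)))" using Suc by simp
  also have "\<dots> = smult ((-1)^k) (Eop (lagp n (g + real k)))" by (simp add: Eop_def pderiv_smult smult_diff_right)
  also have "\<dots> = smult ((-1)^Suc k) (lagp n (g + real (Suc k)))"
    by (simp add: E_lag algebra_simps)
  finally show ?case .
qed

lemma Dk_add: "(pderiv^^k) (p + q) = (pderiv^^k) p + (pderiv^^k) q"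
  by (induction k) (simp_all add: pderiv_add)
lemma Dk_smult: "(pderiv^^k) (smult c p) = smult c ((pderiv^^k) p)"
  by (induction k) (simp_all add: pderiv_smult)
lemma Dk_0: "(pderiv^^k) (0::real poly) = 0"
  by (induction k) simp_all
lemma Ek_add: "(Eop^^k) (p + q) = (Eop^^k) p + (Eop^^k) q"
  by (induction k) (simp_all add: Eop_def pderiv_add)
lemma Ek_smult: "(Eop^^k) (smult c p) = smult c ((Eop^^k) p)"
  by (induction k) (simp_all add: Eop_def pderiv_smult smult_diff_right)
lemma Ek_0: "(Eop^^k) 0 = 0"
  by (induction k) (simp_all add: Eop_def)
lemma Ek_pderiv: "(Eop^^k) (pderiv p) = pderiv ((Eop^^k) p)"
  by (induction k) (simp_all add: Eop_def pderiv_diff)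

lemma Dk_x: "(pderiv^^Suc k) (pCons 0 f) = pCons 0 ((pderiv^^Suc k) f) + smult (real (Suc k)) ((pderiv^^k) f)"
proof (induction k)
  case 0 then show ?case by (simp add: pderiv_pCons)
next
  case (Suc k)
  have "(pderiv^^Suc (Suc k)) (pCons 0 f) = pderiv ((pderiv^^Suc k) (pCons 0 f))" by simp
  also have "\<dots> = pderiv (pCons 0 ((pderiv^^Suc k) f) + smult (real (Suc k)) ((pderiv^^k) f))" using Suc by simp
  also have "\<dots> = pCons 0 ((pderiv^^Suc (Suc k)) f) + smult (real (Suc (Suc k))) ((pderiv^^Suc k) f)"
    by (simp add: pderiv_add pderiv_pCons pderiv_smult) (rule polyeq, simp add: algebra_simps)
  finally show ?case .
qed

lemma Ek_x: "(Eop^^Suc k) (pCons 0 f) = pCons 0 ((Eop^^Suc k) f) + smult (real (Suc k)) ((Eop^^k) f)"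
proof (induction k)
  case 0 then show ?case by (simp add: Eop_def pderiv_pCons)
next
  case (Suc k)
  have "(Eop^^Suc (Suc k)) (pCons 0 f) = Eop ((Eop^^Suc k) (pCons 0 f))" by simp
  also have "\<dots> = Eop (pCons 0 ((Eop^^Suc k) f) + smult (real (Suc k)) ((Eop^^k) f))" using Suc by simp
  also have "\<dots> = pCons 0 ((Eop^^Suc (Suc k)) f) + smult (real (Suc (Suc k))) ((Eop^^Suc k) f)"
    by (simp add: Eop_def pderiv_add pderiv_diff pderiv_pCons pderiv_smult smult_diff_right) (rule polyeq, simp add: algebra_simps)
  finally show ?case .
qed

lemma monom_Suc_mult: "monom 1 (Suc m) * p = pCons 0 (monom 1 m * p)"
  by (simp add: monom_Suc mult_pCons_left)

lemma pderiv_monom_mult: "pderiv (monom 1 (Suc m) * p) = monom 1 m * (smult (real m + 1) p + pCons 0 (pderiv p))"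
  by (rule polyeq) (simp add: pderiv_mult pderiv_monom poly_monom algebra_simps)

lemma Q1: "(pderiv^^m) (monom 1 m * lagp j (real m)) = smult (pochhammer (real j + 1) m) (lagp j 0)"
proof (induction m)
  case 0 then show ?case by simp
next
  case (Suc m)
  have e: "lagp j (real (Suc m)) = lagp j (real m + 1)" by (simp add: add.commute)
  have r5: "smult (real m + 1) (lagp j (real m + 1)) + pCons 0 (pderiv (lagp j (real m + 1))) = smult (real j + real m + 1) (lagp j (real m))"
    by (rule R5)
  have "(pderiv^^Suc m) (monom 1 (Suc m) * lagp j (real (Suc m))) = (pderiv^^m) (pderiv (monom 1 (Suc m) * lagp j (real (Suc m))))"
    by (simp only: funpow_Suc_right o_apply)
  also have "pderiv (monom 1 (Suc m) * lagp j (real (Suc m))) = smult (real j + real m + 1) (monom 1 m * lagp j (real m))"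
    unfolding e pderiv_monom_mult r5 by simp
  also have "(pderiv^^m) \<dots> = smult (pochhammer (real j + 1) (Suc m)) (lagp j 0)"
    unfolding Dk_smult Suc by (simp add: pochhammer_Suc algebra_simps)
  finally show ?case .
qed

lemma DF: "(deriv^^k) (poly p) = poly ((pderiv^^k) (p::real poly))"
proof (induction k)
  case 0 then show ?case by simp
next
  case (Suc k)
  have h: "deriv (poly q) = poly (pderiv q)" for q :: "real poly"
    by (rule ext, rule DERIV_imp_deriv) (rule poly_DERIV)
  show ?case by (simp only: funpow.simps o_apply Suc h)
qed

lemma deriv_poly: "deriv (poly q) = poly (pderiv (q::real poly))"
  by (rule ext, rule DERIV_imp_deriv) (rule poly_DERIV)

lemma EF: "(deriv^^k) (\<lambda>t. exp (-t) * poly q t) = (\<lambda>t. exp (-t) * poly ((Eop^^k) q) t)"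
proof (induction k)
  case 0 then show ?case by simp
next
  case (Suc k)
  have "deriv (\<lambda>t. exp (-t) * poly r t) = (\<lambda>t. exp (-t) * poly (Eop r) t)" for r :: "real poly"
  proof (rule ext, rule DERIV_imp_deriv)
    fix t :: real
    have "((\<lambda>t. exp (-t) * poly r t) has_real_derivative (- exp (-t) * poly r t + exp (-t) * poly (pderiv r) t)) (at t)"
      by (auto intro!: derivative_eq_intros)
    then show "((\<lambda>t. exp (-t) * poly r t) has_real_derivative exp (-t) * poly (Eop r) t) (at t)"
      by (simp add: Eop_def algebra_simps)
  qed
  then show ?case using Suc by simp
qed

lemma fact_split: "k \<le> n \<Longrightarrow> (fact n :: real) = fact (n-k) * pochhammer (real (n-k) + 1) k"
proof -
  assume k: "k \<le> n"
  have "(fact n :: real) = pochhammer 1 ((n-k) + k)" using k by (simp add: pochhammer_fact)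
  also have "\<dots> = pochhammer 1 (n-k) * pochhammer (1 + real (n-k)) k" by (rule pochhammer_product')
  finally show ?thesis by (simp add: pochhammer_fact add.commute)
qed

lemma lag_eq: assumes g: "0 \<le> g" shows "laguerre n g x = poly (lagp n g) x"
proof -
  have t: "pochhammer (g + 1) n / fact n * (pochhammer (- real n) k / (pochhammer (g + 1) k * fact k)) = lc n g k"
    if k: "k \<le> n" for k
  proof -
    have p1: "pochhammer (g + 1) n = pochhammer (g+1) k * pochhammer (g + 1 + real k) (n - k)"
      using k by (rule pochhammer_product)
    have p2: "pochhammer (- real n) k = (-1)^k * pochhammer (real (n-k) + 1) k"
      using k by (simp add: pochhammer_minus of_nat_diff)
    have p3: "(fact n :: real) = fact (n-k) * pochhammer (real (n-k) + 1) k" using k by (rule fact_split)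
    have nz: "pochhammer (g+1) k \<noteq> (0::real)" "pochhammer (real (n-k) + 1) k \<noteq> (0::real)"
      using g by (simp_all add: pochhammer_pos order.strict_implies_not_eq[symmetric] add_nonneg_pos)
    show ?thesis unfolding p1 p2 p3 lc_le[OF k] gb_def using nz
      by (simp add: field_simps)
  qed
  have "laguerre n g x = (\<Sum>k=0..n. lc n g k * x^k)"
    unfolding laguerre_def sum_distrib_left
    by (rule sum.cong) (simp_all add: t[symmetric] mult.assoc)
  also have "\<dots> = poly (lagp n g) x"
    unfolding lagp_def poly_sum poly_monom by (simp add: atLeast0AtMost)
  finally show ?thesis .
qed

lemma pv: "poly (pCons 0 p) x = x * poly p x" by simp

lemma D2: "(f^^2) = f \<circ> f" by (simp add: numeral_2_eq_2)

lemma WL_formula: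
  "(Eop^^(\<alpha>+2)) ((pderiv^^(\<alpha>+2)) (monom 1 (\<alpha>+1) * lagp n (real \<alpha>))) =
   smult (pochhammer (real n + 1) \<alpha>)
    (pCons 0 (smult ((-1)^(\<alpha>+2)) (pderiv (pderiv (lagp n (real \<alpha> + 2)))))
     + smult (real \<alpha> + 2) (smult ((-1)^(\<alpha>+1)) (pderiv (pderiv (lagp n (real \<alpha> + 1)))))
     + smult (real \<alpha> + 2) (smult ((-1)^(\<alpha>+2)) (pderiv (lagp n (real \<alpha> + 2)))))"
proof -
  define c where "c = pochhammer (real n + 1) \<alpha>"
  define f where "f = monom 1 \<alpha> * lagp n (real \<alpha>)"
  define u where "u = lagp n 0"
  have q: "(pderiv^^\<alpha>) f = smult c u" unfolding f_def c_def u_def by (rule Q1)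
  have f1: "monom 1 (\<alpha>+1) * lagp n (real \<alpha>) = pCons 0 f" unfolding f_def by (simp add: monom_Suc_mult)
  have d1: "(pderiv^^(Suc \<alpha>)) f = smult c (pderiv u)"
    by (simp only: funpow.simps o_apply q pderiv_smult)
  have d2: "(pderiv^^(Suc (Suc \<alpha>))) f = smult c (pderiv (pderiv u))"
    by (simp only: funpow.simps o_apply q pderiv_smult)
  have "(pderiv^^(\<alpha>+2)) (pCons 0 f) = (pderiv^^(Suc (Suc \<alpha>))) (pCons 0 f)" by simp
  also have "\<dots> = pCons 0 ((pderiv^^Suc (Suc \<alpha>)) f) + smult (real (Suc (Suc \<alpha>))) ((pderiv^^(Suc \<alpha>)) f)"
    by (rule Dk_x)
  also have "\<dots> = smult c (pCons 0 (pderiv (pderiv u)) + smult (real \<alpha> + 2) (pderiv u))"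
    unfolding d1 d2 by (rule polyeq) (simp add: algebra_simps)
  finally have D: "(pderiv^^(\<alpha>+2)) (pCons 0 f) = smult c (pCons 0 (pderiv (pderiv u)) + smult (real \<alpha> + 2) (pderiv u))" .
  have Eu: "(Eop^^k) u = smult ((-1)^k) (lagp n (real k))" for k unfolding u_def by (simp add: Ek_lag)
  have e2: "(Eop^^(\<alpha>+2)) (pCons 0 (pderiv (pderiv u))) = (Eop^^Suc (Suc \<alpha>)) (pCons 0 (pderiv (pderiv u)))" by simp
  have ra: "real (Suc (Suc \<alpha>)) = real \<alpha> + 2" "real (Suc \<alpha>) = real \<alpha> + 1" "real (\<alpha>+2) = real \<alpha> + 2" by simp_all
  show ?thesis
    unfolding f1 D Ek_smult Ek_add e2 Ek_x Ek_pderiv Eu pderiv_smult ra c_def[symmetric]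
    by (rule polyeq) (simp add: algebra_simps)
qed

lemma WT_formula:
  "(Eop^^(\<alpha>+2)) ((pderiv^^(\<alpha>+2)) (monom 1 (\<alpha>+1) * pCons 0 (lagp j (real \<alpha> + 2)))) =
   smult (pochhammer (real j + 1) (\<alpha>+2) * (-1)^(\<alpha>+2)) (lagp j (real \<alpha> + 2))"
proof -
  have e: "monom 1 (\<alpha>+1) * pCons 0 (lagp j (real \<alpha> + 2)) = monom 1 (\<alpha>+2) * lagp j (real (\<alpha>+2))"
    by (rule polyeq) (simp add: poly_monom algebra_simps)
  have r: "real \<alpha> + 2 = 0 + real (\<alpha>+2)" by simp
  show ?thesis unfolding e Q1 Ek_smult Ek_lag by (simp add: r[symmetric] add.commute)
qed

lemma S1: "pochhammer (real j + 1) (\<alpha>+2) = (real j + 1) * pochhammer (real j + 2) \<alpha> * (real j + real \<alpha> + 2)"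
proof -
  have "pochhammer (real j + 1) (Suc (Suc \<alpha>)) = (real j + 1) * pochhammer (real j + 2) (Suc \<alpha>)"
    by (simp add: pochhammer_rec add.assoc)
  also have "\<dots> = (real j + 1) * (pochhammer (real j + 2) \<alpha> * (real j + real \<alpha> + 2))"
    by (simp add: pochhammer_Suc algebra_simps)
  finally show ?thesis by simp
qed

lemma S2: "t_coef (Suc j) \<alpha> * fact (\<alpha>+2) = (real \<alpha> + 2) * pochhammer (real j + 2) \<alpha>"
proof -
  have A: "(fact (\<alpha>+1+j) :: real) = fact (\<alpha>+1) * pochhammer (real \<alpha> + 2) j"
    using pochhammer_product'[of "1::real" "\<alpha>+1" j] by (simp add: pochhammer_fact add.commute)
  have B: "(fact (j+1+\<alpha>) :: real) = fact (j+1) * pochhammer (real j + 2) \<alpha>"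
    using pochhammer_product'[of "1::real" "j+1" \<alpha>] by (simp add: pochhammer_fact add.commute)
  have C: "(fact (\<alpha>+2) :: real) = (real \<alpha> + 2) * fact (\<alpha>+1)"
    by (simp add: add.commute)
  have "fact (\<alpha>+1) * pochhammer (real \<alpha> + 2) j = fact (j+1) * (pochhammer (real j + 2) \<alpha> :: real)"
    using A B by (simp add: ac_simps)
  then have E: "fact (\<alpha>+1) * pochhammer (real \<alpha> + 2) j / fact (j+1) = (pochhammer (real j + 2) \<alpha> :: real)"
    by simp
  have "t_coef (Suc j) \<alpha> * fact (\<alpha>+2) = (real \<alpha> + 2) * (fact (\<alpha>+1) * pochhammer (real \<alpha> + 2) j / fact (j+1))"
    unfolding t_coef_def C by simp
  then show ?thesis unfolding E .
qed

lemma key_real: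
  fixes x a j A1 A2 A3 B0 B1 B2 :: real
  assumes "x*A3 = (j+a+3)*A2 - (j+1)*B2" "x*A2 = (j+a+2)*A1 - (j+1)*B1" "B2 = B1 + A2" "B1 = B0 + A1"
  shows "x*(x-1)*A3 + (a+2)*(1-x)*A2 + (j+1)*x*B2 - (j+1)*(a+2)*B1 + (j+1)*(j+1+a+1)*B0 = 0"
  using assms by algebra

definition Tp :: "nat \<Rightarrow> nat \<Rightarrow> real poly" where
  "Tp n \<alpha> = (if n = 0 then 0 else smult (- t_coef n \<alpha>) (pCons 0 (lagp (n-1) (real \<alpha> + 2))))"

lemma I1: "x * poly (pderiv (pderiv (lagp n a))) x + (a + 1 - x) * poly (pderiv (lagp n a)) x + real n * poly (lagp n a) x = 0"
  using arg_cong[OF ODE[of n a], of "\<lambda>p. poly p x"] by (simp add: algebra_simps)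

lemma I3: "(-1)^(\<alpha>+1) * x * poly ((Eop^^(\<alpha>+2)) ((pderiv^^(\<alpha>+2)) (monom 1 (\<alpha>+1) * Tp n \<alpha>))) x
   + pochhammer (real n) (\<alpha>+2) * poly (Tp n \<alpha>) x = 0"
proof (cases n)
  case 0
  then show ?thesis by (simp add: Tp_def Dk_0 Ek_0 Eop_def)
next
  case (Suc j)
  have h: "monom 1 (\<alpha>+1) * Tp n \<alpha> = smult (- t_coef n \<alpha>) (monom 1 (\<alpha>+1) * pCons 0 (lagp j (real \<alpha> + 2)))"
    using Suc by (simp add: Tp_def mult_smult_right)
  have W: "(Eop^^(\<alpha>+2)) ((pderiv^^(\<alpha>+2)) (monom 1 (\<alpha>+1) * Tp n \<alpha>)) =
     smult (- t_coef n \<alpha>) (smult (pochhammer (real j + 1) (\<alpha>+2) * (-1)^(\<alpha>+2)) (lagp j (real \<alpha> + 2)))"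
    by (simp only: h Dk_smult Ek_smult WT_formula)
  have T: "poly (Tp n \<alpha>) x = - t_coef n \<alpha> * x * poly (lagp j (real \<alpha> + 2)) x" using Suc by (simp add: Tp_def)
  have P: "pochhammer (real n) (\<alpha>+2) = pochhammer (real j + 1) (\<alpha>+2)" using Suc by (simp add: add.commute)
  show ?thesis unfolding W T P by (simp add: algebra_simps)
qed

lemma I2: "x * poly (pderiv (pderiv (Tp n \<alpha>))) x + (real \<alpha> + 1 - x) * poly (pderiv (Tp n \<alpha>)) x + real n * poly (Tp n \<alpha>) x
   + 1 / fact (\<alpha>+2) * ((-1)^(\<alpha>+1) * x * poly ((Eop^^(\<alpha>+2)) ((pderiv^^(\<alpha>+2)) (monom 1 (\<alpha>+1) * lagp n (real \<alpha>)))) x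
      + pochhammer (real n) (\<alpha>+2) * poly (lagp n (real \<alpha>)) x) = 0"
proof (cases n)
  case 0
  have p: "pochhammer (0::real) (Suc (Suc \<alpha>)) = 0" by (simp add: pochhammer_rec)
  show ?thesis unfolding WL_formula using 0 by (simp add: Tp_def lagp_0 p)
next
  case (Suc j)
  define a where "a = real \<alpha>"
  define t where "t = t_coef n \<alpha>"
  define c where "c = pochhammer (real j + 2) \<alpha>"
  define F where "F = (fact (\<alpha>+2) :: real)"
  define A1 where "A1 = poly (lagp j (a+1)) x"
  define A2 where "A2 = poly (lagp j (a+2)) x"
  define A3 where "A3 = poly (lagp j (a+3)) x"
  define B0 where "B0 = poly (lagp n a) x"
  define B1 where "B1 = poly (lagp n (a+1)) x"
  define B2 where "B2 = poly (lagp n (a+2)) x"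
  define U1 where "U1 = poly (pderiv (lagp j (a+2))) x"
  define U2 where "U2 = poly (pderiv (pderiv (lagp j (a+2)))) x"
  define D2L2 where "D2L2 = poly (pderiv (pderiv (lagp n (a+2)))) x"
  define D2L1 where "D2L1 = poly (pderiv (pderiv (lagp n (a+1)))) x"
  have Fnz: "F \<noteq> 0" by (simp add: F_def)
  have odeu: "x * U2 + (a + 3 - x) * U1 + real j * A2 = 0"
    using arg_cong[OF ODE[of j "a+2"], of "\<lambda>p. poly p x"] unfolding U1_def U2_def A2_def
    by (simp add: algebra_simps)
  have ode2: "x * D2L2 + (a + 3 - x) * (- A3) + real n * B2 = 0"
    using arg_cong[OF ODE[of n "a+2"], of "\<lambda>p. poly p x"] unfolding D2L2_def A3_def B2_def Suc R1
    by (simp add: algebra_simps)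
  have ode1: "x * D2L1 + (a + 2 - x) * (- A2) + real n * B1 = 0"
    using arg_cong[OF ODE[of n "a+1"], of "\<lambda>p. poly p x"] unfolding D2L1_def A2_def B1_def Suc R1
    by (simp add: algebra_simps)
  have r3a: "x * A3 = (real j + a + 3) * A2 - (real j + 1) * B2"
    using arg_cong[OF R3[of j "a+2"], of "\<lambda>p. poly p x"] unfolding A3_def A2_def B2_def Suc
    by (simp add: algebra_simps)
  have r3b: "x * A2 = (real j + a + 2) * A1 - (real j + 1) * B1"
    using arg_cong[OF R3[of j "a+1"], of "\<lambda>p. poly p x"] unfolding A1_def A2_def B1_def Suc
    by (simp add: algebra_simps)
  have r2a: "B2 = B1 + A2"
    using arg_cong[OF R2[of j "a+1"], of "\<lambda>p. poly p x"] unfolding A2_def B1_def B2_def Suc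
    by (simp add: algebra_simps)
  have r2b: "B1 = B0 + A1"
    using arg_cong[OF R2[of j "a"], of "\<lambda>p. poly p x"] unfolding A1_def B0_def B1_def Suc
    by (simp add: algebra_simps)
  have key: "x*(x-1)*A3 + (a+2)*(1-x)*A2 + (real j+1)*x*B2 - (real j+1)*(a+2)*B1 + (real j+1)*(real j+1+a+1)*B0 = 0"
    by (rule key_real[OF r3a r3b r2a r2b])
  have hA: "x * poly (pderiv (pderiv (Tp n \<alpha>))) x + (real \<alpha> + 1 - x) * poly (pderiv (Tp n \<alpha>)) x + real n * poly (Tp n \<alpha>) x
      = - t * (a+1) * A2"
  proof -
    have "x * poly (pderiv (pderiv (Tp n \<alpha>))) x + (real \<alpha> + 1 - x) * poly (pderiv (Tp n \<alpha>)) x + real n * poly (Tp n \<alpha>) x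
      = - t * (x * (2 * U1 + x * U2) + (a + 1 - x) * (A2 + x * U1) + (real j + 1) * x * A2)"
    proof -
      define u where "u = lagp j (a+2)"
      have T0: "Tp n \<alpha> = smult (-t) (pCons 0 u)" unfolding Tp_def t_def u_def a_def using Suc by simp
      have T1: "pderiv (Tp n \<alpha>) = smult (-t) (u + pCons 0 (pderiv u))"
        unfolding T0 by (simp only: pderiv_smult pderiv_pCons)
      have T2: "pderiv (pderiv (Tp n \<alpha>)) = smult (-t) (pderiv u + (pderiv u + pCons 0 (pderiv (pderiv u))))"
        unfolding T1 by (simp only: pderiv_smult pderiv_pCons pderiv_add)
      show ?thesis unfolding T2 unfolding T1 unfolding T0 U1_def[folded u_def] U2_def[folded u_def] A2_def[folded u_def]
        by (simp only: poly_smult poly_add poly_pCons) (simp add: Suc a_def algebra_simps)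
    qed
    also have "\<dots> = - t * (a+1) * A2"
    proof -
      have "x * (2 * U1 + x * U2) + (a + 1 - x) * (A2 + x * U1) + (real j + 1) * x * A2 = (a+1) * A2 + x * (x * U2 + (a + 3 - x) * U1 + real j * A2)"
        by (simp add: algebra_simps)
      then show ?thesis using odeu by simp
    qed
    finally show ?thesis .
  qed
  have sg: "(-1::real)^(\<alpha>+1) * (-1)^(\<alpha>+2) = -1" "(-1::real)^(\<alpha>+1) * (-1)^(\<alpha>+1) = 1"
    by (simp_all add: power_add[symmetric])
  have hW: "(-1)^(\<alpha>+1) * x * poly ((Eop^^(\<alpha>+2)) ((pderiv^^(\<alpha>+2)) (monom 1 (\<alpha>+1) * lagp n (real \<alpha>)))) x
     = - c * (x * (x * D2L2) - (a+2) * (x * D2L1) + (a+2) * x * (- A3))"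
  proof -
    have cc: "pochhammer (real n + 1) \<alpha> = c" unfolding c_def Suc by (simp add: add.commute add.left_commute)
    have dl2: "poly (pderiv (lagp n (a + 2))) x = - A3" unfolding Suc R1 A3_def by (simp add: add.commute add.left_commute)
    have "(-1)^(\<alpha>+1) * x * poly ((Eop^^(\<alpha>+2)) ((pderiv^^(\<alpha>+2)) (monom 1 (\<alpha>+1) * lagp n (real \<alpha>)))) x
      = c * ((-1)^(\<alpha>+1) * (-1)^(\<alpha>+2) * (x * (x * D2L2)) + (-1)^(\<alpha>+1) * (-1)^(\<alpha>+1) * (a+2) * (x * D2L1)
          + (-1)^(\<alpha>+1) * (-1)^(\<alpha>+2) * (a+2) * x * poly (pderiv (lagp n (a + 2))) x)"
      unfolding WL_formula unfolding cc a_def[symmetric] D2L2_def D2L1_def by (simp add: algebra_simps)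
    then show ?thesis unfolding sg dl2 by (simp add: algebra_simps)
  qed
  have hZ: "x * (x * D2L2) - (a+2) * (x * D2L1) + (a+2) * x * (- A3)
     = - x*(x-1)*A3 - real n * x * B2 - (a+2)*(a+2-x)*A2 + real n * (a+2) * B1"
  proof -
    have e1: "x * D2L2 = (a + 3 - x) * A3 - real n * B2" using ode2 by (simp add: algebra_simps)
    have e2: "x * D2L1 = (a + 2 - x) * A2 - real n * B1" using ode1 by (simp add: algebra_simps)
    show ?thesis unfolding e1 e2 by (simp add: algebra_simps)
  qed
  have s1: "pochhammer (real n) (\<alpha>+2) = (real j + 1) * c * (real j + a + 2)"
    unfolding Suc c_def a_def using S1[of j \<alpha>] by (simp add: add.commute)
  have s2: "t * F = (a + 2) * c" unfolding t_def F_def a_def Suc c_def by (rule S2)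
  have tF: "t = (a+2) * c / F" using s2 Fnz by (simp add: field_simps)
  show ?thesis
    unfolding hA hW unfolding a_def[symmetric] F_def[symmetric] unfolding hZ s1 B0_def[symmetric] tF
    using key Fnz Suc by (simp add: field_simps) (drule arg_cong[where f="\<lambda>z. F*c*z"], simp add: algebra_simps)
qed

lemma comb:
  fixes x a nn N F s p L0 L1 L2 T0 T1 T2 WLv WTv :: real
  assumes "x * L2 + (a + 1 - x) * L1 + nn * L0 = 0"
    and "x * T2 + (a + 1 - x) * T1 + nn * T0 + 1 / F * (s * x * WLv + p * L0) = 0"
    and "s * x * WTv + p * T0 = 0"
  shows "(x * (L2 + N * T2) + (a + 1 - x) * (L1 + N * T1) + nn * (L0 + N * T0))
     + N / F * (s * x * (WLv + N * WTv) + p * (L0 + N * T0)) = 0"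
proof -
  have "(x * (L2 + N * T2) + (a + 1 - x) * (L1 + N * T1) + nn * (L0 + N * T0))
     + N / F * (s * x * (WLv + N * WTv) + p * (L0 + N * T0))
     = (x * L2 + (a + 1 - x) * L1 + nn * L0)
       + N * (x * T2 + (a + 1 - x) * T1 + nn * T0 + 1 / F * (s * x * WLv + p * L0))
       + N * N / F * (s * x * WTv + p * T0)"
    by (simp add: divide_inverse algebra_simps)
  then show ?thesis using assms by simp
qed

theorem theorem2p1:
  fixes \<alpha> n :: nat and N x :: real
  assumes "N > 0" and "0 \<le> x"
  shows "(L2op \<alpha> (laguerre_type n \<alpha> N) x + real n * laguerre_type n \<alpha> N x)
         + N / fact (\<alpha> + 2) *
           (L2a4op \<alpha> (laguerre_type n \<alpha> N) x + pochhammer (real n) (\<alpha> + 2) * laguerre_type n \<alpha> N x)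
         = 0"
proof -
  define Y where "Y = lagp n (real \<alpha>) + smult N (Tp n \<alpha>)"
  have hY: "laguerre_type n \<alpha> N = poly Y"
  proof
    fix z
    have a0: "0 \<le> real \<alpha>" "0 \<le> real \<alpha> + 2" by simp_all
    show "laguerre_type n \<alpha> N z = poly Y z"
      unfolding laguerre_type_def T_lag_def Y_def Tp_def lag_eq[OF a0(1)] lag_eq[OF a0(2)]
      by (simp add: algebra_simps)
  qed
  have L2: "L2op \<alpha> (poly Y) x = x * poly (pderiv (pderiv Y)) x + (real \<alpha> + 1 - x) * poly (pderiv Y) x"
    unfolding L2op_def DF by (simp add: numeral_2_eq_2 deriv_poly)
  have inner: "(\<lambda>s. s ^ (\<alpha> + 1) * poly Y s) = poly (monom 1 (\<alpha>+1) * Y)"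
    by (rule ext) (simp add: poly_monom)
  define WL where "WL = (Eop^^(\<alpha>+2)) ((pderiv^^(\<alpha>+2)) (monom 1 (\<alpha>+1) * lagp n (real \<alpha>)))"
  define WT where "WT = (Eop^^(\<alpha>+2)) ((pderiv^^(\<alpha>+2)) (monom 1 (\<alpha>+1) * Tp n \<alpha>))"
  have W: "(Eop^^(\<alpha>+2)) ((pderiv^^(\<alpha>+2)) (monom 1 (\<alpha>+1) * Y)) = WL + smult N WT"
    unfolding WL_def WT_def Y_def by (simp only: distrib_left mult_smult_right Dk_add Dk_smult Ek_add Ek_smult)
  have L4: "L2a4op \<alpha> (poly Y) x = (-1)^(\<alpha>+1) * x * (poly WL x + N * poly WT x)"
  proof -
    have "L2a4op \<alpha> (poly Y) x = (-1)^(\<alpha>+1) * exp x * x * (exp (-x) * poly ((Eop^^(\<alpha>+2)) ((pderiv^^(\<alpha>+2)) (monom 1 (\<alpha>+1) * Y))) x)"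
      unfolding L2a4op_def inner DF EF by simp
    also have "\<dots> = (-1)^(\<alpha>+1) * x * (poly WL x + N * poly WT x)"
      unfolding W by (simp add: exp_minus field_simps)
    finally show ?thesis .
  qed
  note i1 = I1[of x n "real \<alpha>"]
  note i2 = I2[of x n \<alpha>]
  note i3 = I3[of \<alpha> x n]
  have pY: "poly Y x = poly (lagp n (real \<alpha>)) x + N * poly (Tp n \<alpha>) x"
    "poly (pderiv Y) x = poly (pderiv (lagp n (real \<alpha>))) x + N * poly (pderiv (Tp n \<alpha>)) x"
    "poly (pderiv (pderiv Y)) x = poly (pderiv (pderiv (lagp n (real \<alpha>)))) x + N * poly (pderiv (pderiv (Tp n \<alpha>))) x"
    unfolding Y_def by (simp_all only: pderiv_add pderiv_smult poly_add poly_smult)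
  show ?thesis
    unfolding hY L2 L4 pY
    by (rule comb[OF i1 i2[folded WL_def] i3[folded WT_def]])
qed

end
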